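(* Let $\mathcal{F}\subset K[x_1,\ldots,x_n]$ be a chordal polynomial set with $x_1<\cdots<x_n$ as a perfect elimination ordering. Let $\mathcal{T}_1,\ldots,\mathcal{T}_r$ be the triangular sets computed by Wang's method applied to $\mathcal{F}$, i.e. the sets $\mathcal{P}$ from triples $(\mathcal{P},\mathcal{Q},0)\in\mathcal{N}(\mathcal{F})$ (reached by the algorithm) such that $\mathcal{P}$ contains no nonzero constant. Then $G(\mathcal{T}_j)\subseteq G(\mathcal{F})$ for $j=1,\ldots,r$.
   Context: Let $K$ be a field and $K[x_1,\ldots,x_n]$ the polynomial ring, with the variables ordered $x_1<\cdots<x_n$. For a polynomial $F$, $\mathrm{supp}(F)$ is the set of variables effectively appearing in $F$. For a set of polynomials $\mathcal{P}$, $\mathrm{supp}(\mathcal{P})=\bigcup_{F\in\mathcal{P}}\mathrm{supp}(F)$. For a nonconstant $F$, $\mathrm{lv}(F)$ is the greatest variable in $\mathrm{supp}(F)$. For a polynomial set $\mathcal{P}$ and $1\le i\le n$, $\mathcal{P}^{(i)}=\{P\in\mathcal{P}:\mathrm{lv}(P)=x_i\}$; constants belong to no $\mathcal{P}^{(i)}$. The associated graph $G(\mathcal{P})$ is the undirected graph whose vertex set is $\mathrm{supp}(\mathcal{P})$, with an edge between distinct $x_i,x_j$ iff some $F\in\mathcal{P}$ has $x_i,x_j\in\mathrm{supp}(F)$. For graphs, $G\subseteq G'$ means that $G$ is a subgraph of $G'$, i.e. both the vertex set and the edge set are contained. An ordering of the vertices of a graph is a perfect elimination ordering if, for every vertex $v$,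 the set consisting of $v$ and all neighbours of $v$ smaller than $v$ is a clique. A polynomial set $\mathcal{P}$ is called chordal with $x_1<\cdots<x_n$ as a perfect elimination ordering if the restriction of this ordering to $\mathrm{supp}(\mathcal{P})$ is a perfect elimination ordering of $G(\mathcal{P})$. For a nonconstant polynomial $F$ with $\mathrm{lv}(F)=x_k$, write $F=I x_k^d+R$ with $d=\deg(F,x_k)$, $I\in K[x_1,\ldots,x_{k-1}]$, and $\deg(R,x_k)<d$. Then $\mathrm{ini}(F)=I$ is the initial of $F$ and $\mathrm{tail}(F)=R$ is the tail of $F$. For $\mathrm{lv}(T)=x_i$, $\mathrm{prem}(P,T)$ is the pseudo-remainder of $P$ by $T$ with respect to $x_i$. The zero polynomial has empty support. Wang's decomposition tree: $\mathcal{N}(\mathcal{F})$ is the smallest set of triples $(\mathcal{P},\mathcal{Q},i)$, where $\mathcal{P},\mathcal{Q}$ are polynomial sets and $0\le i\le n$, satisfying the following: - $(\mathcal{F},\emptyset,n)\in\mathcal{N}(\mathcal{F})$. - If $(\mathcal{P},\mathcal{Q},i)\in\mathcal{N}(\mathcal{F})$ with $i\ge1$ and $\#\mathcal{P}^{(i)}>1$, then for every $T\in\mathcal{P}^{(i)}$ of minimal degree in $x_i$ among the elements of $\mathcal{P}^{(i)}$, both of the following triples belong to $\mathcal{N}(\mathcal{F})$: - the left child $\big((\mathcal{P}\setminus\mathcal{P}^{(i)})\cup\{T\}\cup\{\mathrm{prem}(P,T):P\in\mathcal{P}^{(i)}\},\ \mathcal{Q}\cup\{\mathrm{ini}(T)\},\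 i\big)$; - the right child $\big((\mathcal{P}\setminus\{T\})\cup\{\mathrm{ini}(T),\mathrm{tail}(T)\},\ \mathcal{Q},\ i\big)$. - If $(\mathcal{P},\mathcal{Q},i)\in\mathcal{N}(\mathcal{F})$ with $i\ge1$ and $\#\mathcal{P}^{(i)}\le1$, then $(\mathcal{P},\mathcal{Q},i-1)\in\mathcal{N}(\mathcal{F})$. Wang's method starts from $(\mathcal{F},\emptyset,n)$ and generates triples of $\mathcal{N}(\mathcal{F})$ according to these rules. It outputs the pairs $(\mathcal{P},\mathcal{Q})$ with $(\mathcal{P},\mathcal{Q},0)$ reached and $\mathcal{P}$ containing no nonzero constant. *)

theory Defs
  imports "HOL-Library.Poly_Mapping" "HOL-Computational_Algebra.Polynomial"
begin

text \<open>Multivariate polynomials over K: finitely supported maps from monomials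
  (exponent vectors, variable x_i is index i) to coefficients.\<close>

type_synonym 'a mpoly = "(nat \<Rightarrow>\<^sub>0 nat) \<Rightarrow>\<^sub>0 'a"

definition mvars :: "'a::zero mpoly \<Rightarrow> nat set" where
  "mvars p = (\<Union>m\<in>Poly_Mapping.keys p. Poly_Mapping.keys m)"

definition set_vars :: "'a::zero mpoly set \<Rightarrow> nat set" where
  "set_vars P = (\<Union>p\<in>P. mvars p)"

definition lv :: "'a::zero mpoly \<Rightarrow> nat" where
  "lv p = Max (mvars p)"

definition Var :: "nat \<Rightarrow> 'a::{zero,one} mpoly" where
  "Var k = Poly_Mapping.single (Poly_Mapping.single k 1) 1"

text \<open>View p as a univariate polynomial in x_k with coefficients not involving x_k.\<close>
definition to_univ :: "nat \<Rightarrow> 'a::comm_ring_1 mpoly \<Rightarrow> 'a mpoly poly" where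
  "to_univ k p = (\<Sum>m\<in>Poly_Mapping.keys p. monom (Poly_Mapping.single (Poly_Mapping.update k 0 m) (Poly_Mapping.lookup p m)) (Poly_Mapping.lookup m k))"

definition from_univ :: "nat \<Rightarrow> 'a::comm_ring_1 mpoly poly \<Rightarrow> 'a mpoly" where
  "from_univ k q = poly q (Var k)"

definition deg_in :: "nat \<Rightarrow> 'a::comm_ring_1 mpoly \<Rightarrow> nat" where
  "deg_in k p = Polynomial.degree (to_univ k p)"

definition ini :: "'a::comm_ring_1 mpoly \<Rightarrow> 'a mpoly" where
  "ini p = lead_coeff (to_univ (lv p) p)"

definition tail :: "'a::comm_ring_1 mpoly \<Rightarrow> 'a mpoly" where
  "tail p = p - ini p * Var (lv p) ^ deg_in (lv p) p"

definition prem :: "'a::field mpoly \<Rightarrow> 'a mpoly \<Rightarrow> 'a mpoly" where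
  "prem P T = from_univ (lv T) (pseudo_mod (to_univ (lv T) P) (to_univ (lv T) T))"

definition level :: "'a::zero mpoly set \<Rightarrow> nat \<Rightarrow> 'a mpoly set" where
  "level P i = {p \<in> P. mvars p \<noteq> {} \<and> lv p = i}"

text \<open>Associated graph: vertices set_vars P, undirected edges as symmetric pairs.\<close>
definition graph_edges :: "'a::zero mpoly set \<Rightarrow> (nat \<times> nat) set" where
  "graph_edges P = {(u, v). u \<noteq> v \<and> (\<exists>p\<in>P. u \<in> mvars p \<and> v \<in> mvars p)}"

definition subgraph_of :: "'a::zero mpoly set \<Rightarrow> 'b::zero mpoly set \<Rightarrow> bool" where
  "subgraph_of P F \<longleftrightarrow> set_vars P \<subseteq> set_vars F \<and> graph_edges P \<subseteq> graph_edges F"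

text \<open>The natural order on variable indices is a perfect elimination ordering of G(P).\<close>
definition chordal_peo :: "'a::zero mpoly set \<Rightarrow> bool" where
  "chordal_peo P \<longleftrightarrow> (\<forall>v\<in>set_vars P.
     (let C = insert v {u \<in> set_vars P. u < v \<and> (u, v) \<in> graph_edges P}
      in \<forall>a\<in>C. \<forall>b\<in>C. a \<noteq> b \<longrightarrow> (a, b) \<in> graph_edges P))"

inductive_set wang_tree :: "nat \<Rightarrow> 'a::field mpoly set \<Rightarrow> ('a mpoly set \<times> 'a mpoly set \<times> nat) set"
  for n :: nat and F :: "'a mpoly set" where
  root: "(F, {}, n) \<in> wang_tree n F"
| left: "\<lbrakk>(P, Q, i) \<in> wang_tree n F; 1 \<le> i;
          \<exists>a\<in>level P i. \<exists>b\<in>level P i. a \<noteq> b;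
          T \<in> level P i; \<forall>p\<in>level P i. deg_in i T \<le> deg_in i p\<rbrakk>
        \<Longrightarrow> ((P - level P i) \<union> {T} \<union> (\<lambda>p. prem p T) ` level P i, Q \<union> {ini T}, i)
              \<in> wang_tree n F"
| right: "\<lbrakk>(P, Q, i) \<in> wang_tree n F; 1 \<le> i;
          \<exists>a\<in>level P i. \<exists>b\<in>level P i. a \<noteq> b;
          T \<in> level P i; \<forall>p\<in>level P i. deg_in i T \<le> deg_in i p\<rbrakk>
        \<Longrightarrow> ((P - {T}) \<union> {ini T, tail T}, Q, i) \<in> wang_tree n F"
| down: "\<lbrakk>(P, Q, i) \<in> wang_tree n F; 1 \<le> i;
          \<forall>a\<in>level P i. \<forall>b\<in>level P i. a = b\<rbrakk>
        \<Longrightarrow> (P, Q, i - 1) \<in> wang_tree n F"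

end

theory Submission
  imports Defs
begin

lemma mvars_zero[simp]: "mvars 0 = {}" by (simp add: mvars_def)
lemma mvars_add: "mvars (p + q) \<subseteq> mvars p \<union> mvars q"
  unfolding mvars_def using Poly_Mapping.keys_add[of p q] by blast
lemma mvars_uminus[simp]: "mvars (- (p::'a::ab_group_add mpoly)) = mvars p"
  unfolding mvars_def by simp
lemma mvars_diff: "mvars (p - (q::'a::ab_group_add mpoly)) \<subseteq> mvars p \<union> mvars q"
  unfolding mvars_def using Poly_Mapping.keys_diff[of p q] by blast
lemma mvars_mult: "mvars (p * (q::'a::comm_semiring_1 mpoly)) \<subseteq> mvars p \<union> mvars q"
proof
  fix x assume "x \<in> mvars (p*q)"
  then obtain m where m: "m \<in> Poly_Mapping.keys (p*q)" "x \<in> Poly_Mapping.keys m" unfolding mvars_def by blast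
  then obtain a b where "m = a + b" "a \<in> Poly_Mapping.keys p" "b \<in> Poly_Mapping.keys q" using Poly_Mapping.keys_mult[of p q] by blast
  then show "x \<in> mvars p \<union> mvars q" using m(2) Poly_Mapping.keys_add[of a b] unfolding mvars_def by blast
qed
lemma mvars_sum: "mvars (sum f A) \<subseteq> (\<Union>i\<in>A. mvars (f i))"
  unfolding mvars_def using Poly_Mapping.keys_sum[of f A] by blast
lemma mvars_one: "mvars (1::'a::comm_semiring_1 mpoly) = {}" by (simp add: mvars_def)
lemma mvars_power: "mvars ((p::'a::comm_semiring_1 mpoly) ^ n) \<subseteq> mvars p"
  by (induction n) (use mvars_one mvars_mult in fastforce)+
lemma mvars_Var: "mvars (Var k :: 'a::comm_semiring_1 mpoly) \<subseteq> {k}"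
  unfolding mvars_def Var_def by auto
lemma mvars_single: "mvars (Poly_Mapping.single m c) \<subseteq> Poly_Mapping.keys m"
  unfolding mvars_def by auto

lemma finite_mvars: "finite (mvars p)"
  unfolding mvars_def by auto

lemma coeff_to_univ: "mvars (coeff (to_univ k p) j) \<subseteq> mvars p"
proof -
  have "coeff (to_univ k p) j = (\<Sum>m\<in>Poly_Mapping.keys p. coeff (monom (Poly_Mapping.single (Poly_Mapping.update k 0 m) (Poly_Mapping.lookup p m)) (Poly_Mapping.lookup m k)) j)"
    unfolding to_univ_def by (simp add: coeff_sum)
  also have "mvars \<dots> \<subseteq> mvars p"
  proof (rule order.trans[OF mvars_sum], rule UN_least)
    fix m assume m: "m \<in> Poly_Mapping.keys p"
    have "mvars (Poly_Mapping.single (Poly_Mapping.update k 0 m) (Poly_Mapping.lookup p m)) \<subseteq> mvars p"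
      using mvars_single[of "Poly_Mapping.update k 0 m"] m unfolding mvars_def
      by (auto simp: Poly_Mapping.keys_update)
    then show "mvars (coeff (monom (Poly_Mapping.single (Poly_Mapping.update k 0 m) (Poly_Mapping.lookup p m)) (Poly_Mapping.lookup m k)) j) \<subseteq> mvars p"
      by (auto simp: coeff_monom)
  qed
  finally show ?thesis .
qed

definition cin :: "nat set \<Rightarrow> 'a::comm_ring_1 mpoly poly \<Rightarrow> bool" where
  "cin V p \<longleftrightarrow> (\<forall>i. mvars (coeff p i) \<subseteq> V)"

lemma cinI: "(\<And>i. mvars (coeff p i) \<subseteq> V) \<Longrightarrow> cin V p" unfolding cin_def by blast
lemma cinD: "cin V p \<Longrightarrow> mvars (coeff p i) \<subseteq> V" unfolding cin_def by blast

lemma cin_smult: "mvars c \<subseteq> V \<Longrightarrow> cin V p \<Longrightarrow> cin V (smult c p)"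
proof (rule cinI)
  fix i assume "mvars c \<subseteq> V" "cin V p"
  then show "mvars (coeff (smult c p) i) \<subseteq> V"
    using mvars_mult[of c "coeff p i"] cinD[of V p i] unfolding coeff_smult by blast
qed
lemma cin_monom: "mvars c \<subseteq> V \<Longrightarrow> cin V (monom c n)"
  by (rule cinI) (simp add: coeff_monom)
lemma cin_add: "cin V p \<Longrightarrow> cin V q \<Longrightarrow> cin V (p + q)"
proof (rule cinI)
  fix i assume "cin V p" "cin V q"
  then show "mvars (coeff (p + q) i) \<subseteq> V"
    using mvars_add[of "coeff p i" "coeff q i"] cinD[of V p i] cinD[of V q i] unfolding coeff_add by blast
qed
lemma cin_diff: "cin V p \<Longrightarrow> cin V q \<Longrightarrow> cin V (p - q)"
proof (rule cinI)
  fix i assume "cin V p" "cin V q"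
  then show "mvars (coeff (p - q) i) \<subseteq> V"
    using mvars_diff[of "coeff p i" "coeff q i"] cinD[of V p i] cinD[of V q i] unfolding coeff_diff by blast
qed
lemma cin_mult: "cin V p \<Longrightarrow> cin V q \<Longrightarrow> cin V (p * q)"
proof (rule cinI)
  fix n assume a: "cin V p" "cin V q"
  have "mvars (coeff (p * q) n) \<subseteq> (\<Union>i\<in>{..n}. mvars (coeff p i * coeff q (n - i)))"
    unfolding coeff_mult by (rule mvars_sum)
  also have "\<dots> \<subseteq> V"
  proof (rule UN_least)
    fix i
    show "mvars (coeff p i * coeff q (n - i)) \<subseteq> V"
      using mvars_mult[of "coeff p i" "coeff q (n - i)"] cinD[OF a(1), of i] cinD[OF a(2), of "n - i"] by blast
  qed
  finally show "mvars (coeff (p * q) n) \<subseteq> V" .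
qed
lemma cin_zero: "cin V 0" by (rule cinI) simp

lemma cin_pdm: "mvars lc \<subseteq> V \<Longrightarrow> cin V q \<Longrightarrow> cin V r \<Longrightarrow> cin V d \<Longrightarrow>
   pseudo_divmod_main lc q r d dr n = (q', r') \<Longrightarrow> cin V q' \<and> cin V r'"
proof (induction n arbitrary: q r dr)
  case 0 then show ?case by simp
next
  case (Suc n)
  have c: "mvars (coeff r dr) \<subseteq> V" using Suc.prems(3) by (rule cinD)
  have q2: "cin V (smult lc q + monom (coeff r dr) n)"
    by (rule cin_add[OF cin_smult[OF Suc.prems(1,2)] cin_monom[OF c]])
  have r2: "cin V (smult lc r - monom (coeff r dr) n * d)"
    by (rule cin_diff[OF cin_smult[OF Suc.prems(1,3)] cin_mult[OF cin_monom[OF c] Suc.prems(4)]])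
  have e: "pseudo_divmod_main lc (smult lc q + monom (coeff r dr) n) (smult lc r - monom (coeff r dr) n * d) d (dr - 1) n = (q', r')"
    using Suc.prems(5) by (simp add: Let_def)
  show ?case by (rule Suc.IH[OF Suc.prems(1) q2 r2 Suc.prems(4) e])
qed

lemma cin_pseudo_mod: "cin V f \<Longrightarrow> cin V g \<Longrightarrow> cin V (pseudo_mod f g)"
proof -
  assume f: "cin V f" and g: "cin V g"
  show ?thesis
  proof (cases "g = 0")
    case True then show ?thesis using f by (simp add: pseudo_mod_def pseudo_divmod_def)
  next
    case False
    obtain q' r' where e: "pseudo_divmod_main (coeff g (degree g)) 0 f g (degree f) (1 + length (coeffs f) - length (coeffs g)) = (q', r')"
      by (metis prod.exhaust)
    have "cin V q' \<and> cin V r'" by (rule cin_pdm[OF cinD[OF g] cin_zero f g e])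
    moreover have "pseudo_mod f g = r'" using False e by (simp add: pseudo_mod_def pseudo_divmod_def)
    ultimately show ?thesis by simp
  qed
qed

lemma mvars_from_univ: "cin V q \<Longrightarrow> k \<in> V \<Longrightarrow> mvars (from_univ k q) \<subseteq> V"
  unfolding from_univ_def poly_altdef
proof (rule order.trans[OF mvars_sum], rule UN_least)
  fix i assume c: "cin V q" "k \<in> V"
  have "mvars (coeff q i * Var k ^ i) \<subseteq> mvars (coeff q i) \<union> mvars (Var k ^ i :: 'a mpoly)" using mvars_mult[of "coeff q i" "Var k ^ i"] by blast
  also have "\<dots> \<subseteq> V"
  proof -
    have 1: "mvars (coeff q i) \<subseteq> V" using c(1) unfolding cin_def by blast
    have 2: "mvars (Var k ^ i :: 'a mpoly) \<subseteq> {k}"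
      using mvars_power[of "Var k :: 'a mpoly" i] mvars_Var[of k, where 'a='a] by (rule order.trans)
    show ?thesis using 1 2 c(2) by blast
  qed
  finally show "mvars (coeff q i * Var k ^ i) \<subseteq> V" .
qed


lemma mvars_ini: "mvars (ini T) \<subseteq> mvars T"
  unfolding ini_def by (rule coeff_to_univ)

lemma lv_in: "mvars T \<noteq> {} \<Longrightarrow> lv T \<in> mvars T"
  unfolding lv_def using finite_mvars Max_in by blast

lemma mvars_tail: fixes T :: "'a::comm_ring_1 mpoly" shows "mvars T \<noteq> {} \<Longrightarrow> mvars (tail T) \<subseteq> mvars T"
proof -
  assume ne: "mvars T \<noteq> {}"
  have "mvars (tail T) \<subseteq> mvars T \<union> mvars (ini T * Var (lv T) ^ deg_in (lv T) T)"
    unfolding tail_def by (rule mvars_diff)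
  also have "\<dots> \<subseteq> mvars T \<union> (mvars (ini T) \<union> mvars (Var (lv T) ^ deg_in (lv T) T :: 'a mpoly))"
    using mvars_mult[of "ini T" "Var (lv T) ^ deg_in (lv T) T"] by blast
  also have "\<dots> \<subseteq> mvars T"
    using mvars_ini[of T] mvars_power[of "Var (lv T) :: 'a mpoly" "deg_in (lv T) T"] mvars_Var[of "lv T", where 'a='a] lv_in[OF ne]
    by blast
  finally show ?thesis .
qed

lemma cin_to_univ: "mvars p \<subseteq> V \<Longrightarrow> cin V (to_univ k p)"
  unfolding cin_def using coeff_to_univ by blast

lemma mvars_prem: "mvars T \<noteq> {} \<Longrightarrow> mvars (prem p T) \<subseteq> mvars p \<union> mvars T"
  unfolding prem_def
  by (rule mvars_from_univ) (auto intro!: cin_pseudo_mod cin_to_univ lv_in)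

definition clique :: "'a::zero mpoly set \<Rightarrow> nat set \<Rightarrow> bool" where
  "clique F C \<longleftrightarrow> C \<subseteq> set_vars F \<and> (\<forall>a\<in>C. \<forall>b\<in>C. a \<noteq> b \<longrightarrow> (a, b) \<in> graph_edges F)"

lemma clique_subset: "clique F B \<Longrightarrow> A \<subseteq> B \<Longrightarrow> clique F A"
  unfolding clique_def by blast

lemma clique_union:
  assumes ch: "chordal_peo F" and A: "clique F A" "finite A" "A \<noteq> {}" "Max A = i"
    and B: "clique F B" "finite B" "B \<noteq> {}" "Max B = i"
  shows "clique F (A \<union> B)"
proof -
  have iA: "i \<in> A" using A Max_in by blast
  then have iF: "i \<in> set_vars F" using A(1) unfolding clique_def by blast
  define C where "C = insert i {u \<in> set_vars F. u < i \<and> (u, i) \<in> graph_edges F}"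
  have cl: "\<forall>a\<in>C. \<forall>b\<in>C. a \<noteq> b \<longrightarrow> (a, b) \<in> graph_edges F"
    using bspec[OF ch[unfolded chordal_peo_def] iF] unfolding Let_def C_def .
  have "C \<subseteq> set_vars F" using iF unfolding C_def by blast
  then have cC: "clique F C" using cl unfolding clique_def by blast
  have sub: "X \<subseteq> C" if "clique F X" "finite X" "Max X = i" "i \<in> X" for X
  proof
    fix a assume a: "a \<in> X"
    have "a \<le> i" using that a Max_ge by blast
    show "a \<in> C"
    proof (cases "a = i")
      case True then show ?thesis unfolding C_def by simp
    next
      case False
      then have "a < i" using \<open>a \<le> i\<close> by simp
      moreover have "a \<in> set_vars F" using that(1) a unfolding clique_def by blast
      moreover have "(a, i) \<in> graph_edges F" using that(1,4) a False unfolding clique_def by blast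
      ultimately show ?thesis unfolding C_def by blast
    qed
  qed
  have "i \<in> B" using B Max_in by blast
  then have "A \<union> B \<subseteq> C" using sub A B iA by blast
  then show ?thesis using cC clique_subset by blast
qed

lemma invariant:
  assumes ch: "chordal_peo F"
  shows "(P, Q, i) \<in> wang_tree n F \<Longrightarrow> \<forall>p\<in>P. clique F (mvars p)"
proof (induction rule: wang_tree.induct)
  case root
  show ?case
  proof
    fix p assume p: "p \<in> F"
    have "mvars p \<subseteq> set_vars F" using p unfolding set_vars_def by blast
    moreover have "(a, b) \<in> graph_edges F" if "a \<in> mvars p" "b \<in> mvars p" "a \<noteq> b" for a b
      unfolding graph_edges_def using that p by blast
    ultimately show "clique F (mvars p)" unfolding clique_def by blast
  qed
next
  case (left P Q i T)
  have T: "T \<in> P" "mvars T \<noteq> {}" "lv T = i" using left.hyps(4) unfolding level_def by auto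
  have cT: "clique F (mvars T)" using left.IH T(1) by blast
  have new: "clique F (mvars (prem p T))" if p: "p \<in> level P i" for p
  proof -
    have pp: "p \<in> P" "mvars p \<noteq> {}" "lv p = i" using p unfolding level_def by auto
    have cp: "clique F (mvars p)" using left.IH pp(1) by blast
    have "clique F (mvars p \<union> mvars T)"
      by (rule clique_union[OF ch cp finite_mvars pp(2) _ cT finite_mvars T(2)])
         (use pp(3) T(3) in \<open>simp_all add: lv_def\<close>)
    then show ?thesis using mvars_prem[OF T(2), of p] clique_subset by blast
  qed
  show ?case
  proof
    fix x assume x: "x \<in> P - level P i \<union> {T} \<union> (\<lambda>p. prem p T) ` level P i"
    show "clique F (mvars x)"
    proof (cases "x \<in> (\<lambda>p. prem p T) ` level P i")
      case True
      then obtain p where "p \<in> level P i" "x = prem p T" by blast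
      then show ?thesis using new by blast
    next
      case False
      then have "x \<in> P" using x T(1) by blast
      then show ?thesis using left.IH by blast
    qed
  qed
next
  case (right P Q i T)
  have T: "T \<in> P" "mvars T \<noteq> {}" using right.hyps(4) unfolding level_def by auto
  then have "clique F (mvars T)" using right.IH by blast
  then have a: "clique F (mvars (ini T))" and b: "clique F (mvars (tail T))"
    using mvars_ini[of T] mvars_tail[OF T(2)] clique_subset by blast+
  show ?case
  proof
    fix x assume x: "x \<in> P - {T} \<union> {ini T, tail T}"
    then consider "x \<in> P" | "x = ini T" | "x = tail T" by blast
    then show "clique F (mvars x)" using a b right.IH by cases blast+
  qed
next
  case (down P Q i)
  then show ?case by simp
qed

theorem corollary4p4:
  fixes n :: nat and F :: "'a::field mpoly set"
  assumes "finite F"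
    and "\<forall>f\<in>F. mvars f \<subseteq> {1..n}"
    and "chordal_peo F"
    and "(T, Q, 0) \<in> wang_tree n F"
    and "\<forall>p\<in>T. mvars p = {} \<longrightarrow> p = 0"
  shows "subgraph_of T F"
proof -
  have c: "\<forall>p\<in>T. clique F (mvars p)" using invariant[OF assms(3) assms(4)] .
  show ?thesis unfolding subgraph_of_def
  proof
    show "set_vars T \<subseteq> set_vars F" using c unfolding set_vars_def[of T] clique_def by blast
    show "graph_edges T \<subseteq> graph_edges F"
    proof
      fix e assume "e \<in> graph_edges T"
      then obtain u v p where "e = (u, v)" "u \<noteq> v" "p \<in> T" "u \<in> mvars p" "v \<in> mvars p"
        unfolding graph_edges_def by blast
      then show "e \<in> graph_edges F" using c unfolding clique_def by blast
    qed
  qed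
qed

end
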